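(* Consider the closed-loop switching semilinear system $\Sigma_0=(X,\mathrm{PC},\phi)$ described in the context and suppose $\Sigma_0$ is USGES. Then for every $r>0$ there exist $\underline{c}_r,\overline{c}_r>0$ and a Lipschitz continuous functional $V_r:X\to\mathbb{R}_+$ such that $\underline{c}_r\|x\|\le V_r(x)\le\overline{c}_r\|x\|$ for all $x\in B_X(0,r)$, and $\overline{D}_qV_r(x)\le-\|x\|$ for all $x\in B_X(0,r)$ and $q\in\mathcal{Q}$.
   Context: $X,U$ are Banach spaces, $B_X(0,r)$ is the closed ball of radius $r$. $A$ is the infinitesimal generator of a $C_0$-group $(T_t)_{t\in\mathbb{R}}$ of bounded linear operators on $X$. $\mathcal{Q}$ is a nonempty set and for $q\in\mathcal{Q}$, $f_q:X\times U\to X$ is Lipschitz continuous with a Lipschitz constant $L_f>0$ independent of $q$ and $f_q(0,0)=0$. $K:X\to U$ is globally Lipschitz with $K(0)=0$. For $q\in\mathcal{Q}$ and $x_0\in X$, let $x(\cdot,x_0,q)$ be the unique continuous mild solution of $\dot x=Ax+f_q(x,K(x))$, i.e. $x(t,x_0,q)=T_tx_0+\int_0^tT_{t-s}f_q(x(s,x_0,q),K(x(s,x_0,q)))ds$, and set $T_q(t)x_0=x(t,x_0,q)$. $\mathrm{PC}$ is the set of piecewise constant $\sigma:\mathbb{R}_+\to\mathcal{Q}$; for $\sigma$ equal to $q_k$ on $[t_k,t_{k+1})$, $0=t_0<t_1<\cdots\to\infty$, define $\phi(t,x_0,\sigma)=T_{q_k}(t-t_k)T_{q_{k-1}}(t_k-t_{k-1})\cdots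 T_{q_0}(t_1)x_0$ for $t\in[t_k,t_{k+1})$. $\Sigma_0$ is USGES if for every $r>0$ there exist $M(r),\lambda(r)>0$ with $\|\phi(t,x,\sigma)\|\le M(r)e^{-\lambda(r)t}\|x\|$ for all $t\ge0$, $x\in B_X(0,r)$, $\sigma\in\mathrm{PC}$. For $q\in\mathcal{Q}$, $\overline{D}_qV(x)=\limsup_{h\downarrow0}\frac1h\big(V(T_q(h)x)-V(x)\big)$. *)

theory Defs
  imports "HOL-Analysis.Analysis"
begin

text \<open>Strongly continuous group of bounded linear operators on a Banach space.
  (Its generator A is determined by T and is not needed explicitly.)\<close>
definition C0_group :: "(real \<Rightarrow> 'x::banach \<Rightarrow> 'x) \<Rightarrow> bool" where
  "C0_group T \<longleftrightarrow>
     (\<forall>t. bounded_linear (T t)) \<and> T 0 = id \<and>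
     (\<forall>s t. T (s + t) = T s \<circ> T t) \<and>
     (\<forall>x. continuous_on UNIV (\<lambda>t. T t x))"

text \<open>sol q t x0 = x(t,x0,q) = T_q(t) x0 is a continuous mild solution of
  x' = A x + f_q(x, K x), x(0) = x0, for t >= 0.\<close>
definition is_mild_solution_map ::
  "(real \<Rightarrow> 'x::banach \<Rightarrow> 'x) \<Rightarrow> ('q \<Rightarrow> 'x \<times> 'u \<Rightarrow> 'x) \<Rightarrow> ('x \<Rightarrow> 'u)
     \<Rightarrow> ('q \<Rightarrow> real \<Rightarrow> 'x \<Rightarrow> 'x) \<Rightarrow> bool" where
  "is_mild_solution_map T f K sol \<longleftrightarrow>
     (\<forall>q x0. continuous_on {0..} (\<lambda>t. sol q t x0) \<and>
        (\<forall>t\<ge>0. sol q t x0 =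
           T t x0 + integral {0..t} (\<lambda>s. T (t - s) (f q (sol q s x0, K (sol q s x0))))))"

text \<open>Switching times 0 = t_0 < t_1 < ... \<rightarrow> \<infinity>.  A switching signal in PC is given
  by such times ts together with the modes qs k on [ts k, ts (k+1)).\<close>
definition switch_times :: "(nat \<Rightarrow> real) \<Rightarrow> bool" where
  "switch_times ts \<longleftrightarrow> ts 0 = 0 \<and> strict_mono ts \<and> filterlim ts at_top sequentially"

fun switch_state :: "('q \<Rightarrow> real \<Rightarrow> 'x \<Rightarrow> 'x) \<Rightarrow> (nat \<Rightarrow> real) \<Rightarrow> (nat \<Rightarrow> 'q)
    \<Rightarrow> 'x \<Rightarrow> nat \<Rightarrow> 'x" where
  "switch_state sol ts qs x 0 = x"
| "switch_state sol ts qs x (Suc k) =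
     sol (qs k) (ts (Suc k) - ts k) (switch_state sol ts qs x k)"

definition phi :: "('q \<Rightarrow> real \<Rightarrow> 'x \<Rightarrow> 'x) \<Rightarrow> (nat \<Rightarrow> real) \<Rightarrow> (nat \<Rightarrow> 'q)
    \<Rightarrow> real \<Rightarrow> 'x \<Rightarrow> 'x" where
  "phi sol ts qs t x =
     (let k = (THE k. ts k \<le> t \<and> t < ts (Suc k))
      in sol (qs k) (t - ts k) (switch_state sol ts qs x k))"

definition USGES :: "('q \<Rightarrow> real \<Rightarrow> 'x::real_normed_vector \<Rightarrow> 'x) \<Rightarrow> bool" where
  "USGES sol \<longleftrightarrow>
     (\<forall>r>0. \<exists>M>0. \<exists>lam>0. \<forall>ts qs x t.
        switch_times ts \<longrightarrow> x \<in> cball 0 r \<longrightarrow> t \<ge> 0 \<longrightarrow>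
        norm (phi sol ts qs t x) \<le> M * exp (- lam * t) * norm x)"

definition dini_upper :: "('q \<Rightarrow> real \<Rightarrow> 'x \<Rightarrow> 'x) \<Rightarrow> ('x \<Rightarrow> real) \<Rightarrow> 'q \<Rightarrow> 'x \<Rightarrow> ereal" where
  "dini_upper sol V q x = Limsup (at_right 0) (\<lambda>h. ereal ((V (sol q h x) - V x) / h))"

end

theory Submission
  imports Defs
begin


lemma ubp:
  fixes F :: "'i \<Rightarrow> 'a::banach \<Rightarrow> 'b::real_normed_vector"
  assumes lin: "\<And>i. bounded_linear (F i)"
    and pw: "\<And>x. \<exists>B. \<forall>i. norm (F i x) \<le> B"
  shows "\<exists>B\<ge>0. \<forall>i x. norm (F i x) \<le> B * norm x"
proof -
  define E where "E n = {x. \<forall>i. norm (F i x) \<le> real n}" for n :: nat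
  have cl: "closed (E n)" for n
  proof -
    have "E n = (\<Inter>i. {x. norm (F i x) \<le> real n})" unfolding E_def by auto
    moreover have "closed {x. norm (F i x) \<le> real n}" for i
      by (intro closed_Collect_le continuous_intros linear_continuous_on lin continuous_on_const)
    ultimately show ?thesis by auto
  qed
  have un: "(\<Union>(range E)) = UNIV"
  proof (rule set_eqI, rule iffI)
    fix x show "x \<in> \<Union>(range E) \<Longrightarrow> x \<in> UNIV" by simp
  next
    fix x assume "x \<in> (UNIV :: 'a set)"
    obtain B where "\<forall>i. norm (F i x) \<le> B" using pw by blast
    moreover obtain n where "B \<le> real n" using real_arch_simple by blast
    ultimately have "x \<in> E n" unfolding E_def using order_trans by blast
    then show "x \<in> \<Union>(range E)" by blast
  qed
  have "\<exists>T\<in>range E. \<not> (closedin euclidean T \<and> euclidean interior_of T = {})"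
  proof (rule ccontr)
    assume "\<not> ?thesis"
    then have "euclidean interior_of \<Union>(range E) = {}"
      by (intro Baire_category_alt) (auto simp: completely_metrizable_space_euclidean)
    then show False using un by simp
  qed
  then obtain n where "interior (E n) \<noteq> {}" using cl by auto
  then obtain x0 where "x0 \<in> interior (E n)" by blast
  then obtain d where d: "d > 0" "ball x0 d \<subseteq> E n" by (meson mem_interior)
  have small: "norm (F i y) \<le> 2 * real n" if "norm y < d" for i y
  proof -
    have "x0 + y \<in> E n" "x0 \<in> E n" using d that by (auto simp: dist_norm)
    then have "norm (F i (x0 + y)) \<le> real n" "norm (F i x0) \<le> real n" unfolding E_def by auto
    moreover have "F i y = F i (x0 + y) - F i x0" using lin[of i] by (simp add: linear_simps)
    ultimately show ?thesis by (metis norm_triangle_ineq4 order_trans add_mono mult_2)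
  qed
  show ?thesis
  proof (intro exI[of _ "4 * real n / d"] conjI allI)
    show "0 \<le> 4 * real n / d" using d by simp
    fix i x
    show "norm (F i x) \<le> 4 * real n / d * norm x"
    proof (cases "x = 0")
      case True then show ?thesis using lin[of i] by (simp add: linear_simps)
    next
      case False
      define c where "c = d / (2 * norm x)"
      have c: "c > 0" using False d by (simp add: c_def)
      have "norm (c *\<^sub>R x) < d" using False d by (simp add: c_def)
      then have "norm (F i (c *\<^sub>R x)) \<le> 2 * real n" by (rule small)
      then have "c * norm (F i x) \<le> 2 * real n" using lin[of i] c by (simp add: linear_simps)
      then have "norm (F i x) \<le> 2 * real n / c" using c by (simp add: field_simps)
      also have "\<dots> = 4 * real n / d * norm x" using False d by (simp add: c_def field_simps)
      finally show ?thesis .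
    qed
  qed
qed




lemma C0_lin: "C0_group T \<Longrightarrow> bounded_linear (T t)" unfolding C0_group_def by blast
lemma C0_zero: "C0_group T \<Longrightarrow> T 0 x = x" unfolding C0_group_def by simp
lemma C0_add: "C0_group T \<Longrightarrow> T (s + t) x = T s (T t x)" unfolding C0_group_def by simp
lemma C0_cont: "C0_group T \<Longrightarrow> continuous_on S (\<lambda>t. T t x)"
  unfolding C0_group_def by (meson continuous_on_subset subset_UNIV)

lemma T_unit_bound:
  fixes T :: "real \<Rightarrow> 'x::banach \<Rightarrow> 'x"
  assumes "C0_group T"
  shows "\<exists>MT\<ge>1. \<forall>t x. 0 \<le> t \<longrightarrow> t \<le> 1 \<longrightarrow> norm (T t x) \<le> MT * norm x"
proof -
  define F where "F t = T (max 0 (min 1 t))" for t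
  have "\<exists>B. \<forall>t. norm (F t x) \<le> B" for x
  proof -
    have "compact ((\<lambda>t. T t x) ` {0..1})"
      by (intro compact_continuous_image C0_cont assms) auto
    then obtain B where B: "\<forall>y\<in>(\<lambda>t. T t x) ` {0..1}. norm y \<le> B"
      using compact_imp_bounded bounded_iff by metis
    show ?thesis by (intro exI[of _ B] allI) (use B in \<open>auto simp: F_def\<close>)
  qed
  moreover have "bounded_linear (F t)" for t unfolding F_def by (rule C0_lin[OF assms])
  ultimately obtain B where B: "B \<ge> 0" "\<forall>t x. norm (F t x) \<le> B * norm x"
    using ubp[of F] by blast
  show ?thesis
  proof (intro exI[of _ "max 1 B"] conjI allI impI)
    fix t :: real and x assume "0 \<le> t" "t \<le> 1"
    then have "norm (T t x) \<le> B * norm x" using B(2)[rule_format, of t x] by (simp add: F_def)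
    also have "\<dots> \<le> max 1 B * norm x" by (intro mult_right_mono) auto
    finally show "norm (T t x) \<le> max 1 B * norm x" .
  qed simp
qed

lemma T_exp_bound:
  fixes T :: "real \<Rightarrow> 'x::banach \<Rightarrow> 'x"
  assumes T: "C0_group T"
  shows "\<exists>MT\<ge>1. \<exists>w\<ge>0. \<forall>t x. 0 \<le> t \<longrightarrow> norm (T t x) \<le> MT * exp (w * t) * norm x"
proof -
  obtain MT where MT: "MT \<ge> 1" "\<And>t x. 0 \<le> t \<Longrightarrow> t \<le> 1 \<Longrightarrow> norm (T t x) \<le> MT * norm x"
    using T_unit_bound[OF T] by blast
  have P: "\<forall>t x. 0 \<le> t \<longrightarrow> t \<le> real n + 1 \<longrightarrow> norm (T t x) \<le> MT ^ (n+1) * norm x" for n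
  proof (induction n)
    case 0 then show ?case using MT by simp
  next
    case (Suc n)
    show ?case
    proof (intro allI impI)
      fix t :: real and x assume t: "0 \<le> t" "t \<le> real (Suc n) + 1"
      show "norm (T t x) \<le> MT ^ (Suc n + 1) * norm x"
      proof (cases "t \<le> real n + 1")
        case True
        then have "norm (T t x) \<le> MT ^ (n+1) * norm x" using Suc t by blast
        also have "\<dots> \<le> MT ^ (Suc n + 1) * norm x"
          by (intro mult_right_mono power_increasing) (use MT in auto)
        finally show ?thesis .
      next
        case False
        have "T t x = T 1 (T (t - 1) x)" using C0_add[OF T, of 1 "t - 1"] by simp
        then have "norm (T t x) \<le> MT * norm (T (t - 1) x)" using MT(2)[of 1] by simp
        also have "norm (T (t - 1) x) \<le> MT ^ (n+1) * norm x" using Suc t False by auto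
        finally show ?thesis using MT by (simp add: mult_left_mono mult.assoc)
      qed
    qed
  qed
  have "\<forall>t x. 0 \<le> t \<longrightarrow> norm (T t x) \<le> MT * exp (ln MT * t) * norm x"
  proof (intro allI impI)
    fix t :: real and x assume t: "0 \<le> t"
    define n where "n = nat \<lfloor>t\<rfloor>"
    have n: "real n \<le> t" "t \<le> real n + 1" using t unfolding n_def by linarith+
    have "norm (T t x) \<le> MT ^ (n+1) * norm x" using P t n by blast
    also have "MT ^ (n+1) = MT * exp (real n * ln MT)"
      using MT by (simp add: exp_of_nat_mult)
    also have "\<dots> \<le> MT * exp (ln MT * t)"
      using MT n by (intro mult_left_mono) (auto simp: mult.commute intro!: mult_right_mono)
    finally show "norm (T t x) \<le> MT * exp (ln MT * t) * norm x"
      by (simp add: mult_right_mono)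
  qed
  then show ?thesis using MT by (intro exI[of _ MT] conjI exI[of _ "ln MT"]) auto
qed




lemma gronwall:
  fixes v :: "real \<Rightarrow> real"
  assumes cont: "continuous_on {0..b} v" and C: "C \<ge> 0"
    and ineq: "\<And>t. t \<in> {0..b} \<Longrightarrow> v t \<le> a + C * integral {0..t} v"
    and t: "t \<in> {0..b}"
  shows "a + C * integral {0..t} v \<le> a * exp (C * t)"
proof -
  define g where "g t = a + C * integral {0..t} v" for t
  define h where "h t = g t * exp (- C * t)" for t
  have dg: "(g has_real_derivative C * v s) (at s within {0..b})" if "s \<in> {0..b}" for s
    unfolding g_def using integral_has_real_derivative[OF cont that]
    by (auto intro!: derivative_eq_intros)
  have dh: "(h has_real_derivative (C * v s * exp (- C * s) + g s * (exp (- C * s) * (- C))))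
      (at s within {0..b})" if "s \<in> {0..b}" for s
    unfolding h_def using dg[OF that]
    by (auto intro!: derivative_eq_intros)
  have hle: "h t \<le> h 0"
  proof (cases "t = 0")
    case True then show ?thesis by simp
  next
    case False
    then have t0: "0 < t" using t by auto
    have ch: "continuous_on {0..t} h"
      using DERIV_continuous_on[OF dh] continuous_on_subset t by (metis atLeastAtMost_iff atLeastatMost_subset_iff order_refl)
    have "\<exists>l z. 0 < z \<and> z < t \<and> DERIV h z :> l \<and> h t - h 0 = (t - 0) * l"
    proof (rule MVT[OF t0 ch])
      fix x assume x: "0 < x" "x < t"
      then have "at x within {0..b} = at x" using t by (intro at_within_Icc_at) auto
      then show "h differentiable (at x)" using dh[of x] x t
        by (auto simp: real_differentiable_def)
    qed
    then obtain l z where z: "0 < z" "z < t" "DERIV h z :> l" "h t - h 0 = t * l" by auto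
    have "at z within {0..b} = at z" using t z by (intro at_within_Icc_at) auto
    then have "l = C * v z * exp (- C * z) + g z * (exp (- C * z) * (- C))"
      using dh[of z] z t DERIV_unique by auto
    also have "\<dots> = C * (v z - g z) * exp (- C * z)" by (simp add: algebra_simps)
    also have "\<dots> \<le> 0"
    proof -
      have "v z \<le> g z" using ineq[of z] z t by (auto simp: g_def)
      then show ?thesis using C by (simp add: mult_nonneg_nonpos mult_nonpos_nonneg)
    qed
    finally have "t * l \<le> 0" using t0 by (simp add: mult_nonneg_nonpos)
    then show ?thesis using z(4) by simp
  qed
  then have "g t * exp (- C * t) \<le> a" by (simp add: h_def g_def)
  then have "g t \<le> a * exp (C * t)"
    by (simp add: exp_minus field_simps)
  then show ?thesis by (simp add: g_def)
qed




locale sys =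
  fixes T :: "real \<Rightarrow> 'x::banach \<Rightarrow> 'x"
    and f :: "'q \<Rightarrow> 'x \<times> 'u::banach \<Rightarrow> 'x"
    and K :: "'x \<Rightarrow> 'u"
    and sol :: "'q \<Rightarrow> real \<Rightarrow> 'x \<Rightarrow> 'x"
    and Lf LK MT w :: real
  assumes T: "C0_group T" and Lf: "Lf > 0" and fL: "\<And>q. Lf-lipschitz_on UNIV (f q)"
    and KL: "LK-lipschitz_on UNIV K" and mild: "is_mild_solution_map T f K sol"
    and MT: "MT \<ge> 1" and w: "w \<ge> 0"
    and Tb: "\<And>t x. 0 \<le> t \<Longrightarrow> norm (T t x) \<le> MT * exp (w * t) * norm x"
begin

definition snorm :: "'x \<Rightarrow> real" where
  "snorm x = (SUP s\<in>{0..}. exp (- w * s) * norm (T s x))"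

lemma sn_elem_bound: "0 \<le> s \<Longrightarrow> exp (- w * s) * norm (T s x) \<le> MT * norm x"
proof -
  assume s: "0 \<le> s"
  have "exp (- w * s) * norm (T s x) \<le> exp (- w * s) * (MT * exp (w * s) * norm x)"
    using Tb[OF s] by (intro mult_left_mono) auto
  also have "\<dots> = MT * norm x" by (simp add: exp_minus field_simps)
  finally show ?thesis .
qed

lemma sn_bdd: "bdd_above ((\<lambda>s. exp (- w * s) * norm (T s x)) ` {0..})"
  using sn_elem_bound by (intro bdd_aboveI[of _ "MT * norm x"]) auto

lemma sn_upper: "0 \<le> s \<Longrightarrow> exp (- w * s) * norm (T s x) \<le> snorm x"
  unfolding snorm_def by (rule cSUP_upper[OF _ sn_bdd]) auto

lemma sn_least: "(\<And>s. 0 \<le> s \<Longrightarrow> exp (- w * s) * norm (T s x) \<le> B) \<Longrightarrow> snorm x \<le> B"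
  unfolding snorm_def by (rule cSUP_least) auto

lemma norm_le_sn: "norm x \<le> snorm x"
  using sn_upper[of 0 x] by (simp add: C0_zero[OF T])

lemma sn_le: "snorm x \<le> MT * norm x"
  by (rule sn_least) (rule sn_elem_bound)

lemma Tcont:
  assumes g: "continuous_on S g" and a: "continuous_on S a" and aB: "\<And>s. s \<in> S \<Longrightarrow> 0 \<le> a s \<and> a s \<le> B"
  shows "continuous_on S (\<lambda>s. T (a s) (g s))"
  unfolding continuous_on_def
proof
  fix s0 assume s0: "s0 \<in> S"
  let ?F = "at s0 within S"
  have c1: "((\<lambda>s. T (a s) (g s - g s0)) \<longlongrightarrow> 0) ?F"
  proof (rule Lim_null_comparison)
    show "\<forall>\<^sub>F s in ?F. norm (T (a s) (g s - g s0)) \<le> MT * exp (w * B) * norm (g s - g s0)"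
      unfolding eventually_at_filter
    proof (rule always_eventually, intro allI impI)
      fix s assume "s \<in> S"
      then have "norm (T (a s) (g s - g s0)) \<le> MT * exp (w * a s) * norm (g s - g s0)"
        using Tb aB by blast
      also have "\<dots> \<le> MT * exp (w * B) * norm (g s - g s0)"
        using MT w aB[OF \<open>s \<in> S\<close>] by (intro mult_right_mono mult_left_mono) (auto intro: mult_left_mono)
      finally show "norm (T (a s) (g s - g s0)) \<le> MT * exp (w * B) * norm (g s - g s0)" .
    qed
    have "((\<lambda>s. g s - g s0) \<longlongrightarrow> 0) ?F"
      by (subst LIM_zero_iff) (use g s0 in \<open>auto simp: continuous_on_def\<close>)
    then show "((\<lambda>s. MT * exp (w * B) * norm (g s - g s0)) \<longlongrightarrow> 0) ?F"
      by (intro tendsto_mult_right_zero tendsto_norm_zero)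
  qed
  have "continuous_on S (\<lambda>s. T (a s) (g s0))"
    by (rule continuous_on_compose2[OF C0_cont[OF T, of UNIV] a]) auto
  then have c2: "((\<lambda>s. T (a s) (g s0) - T (a s0) (g s0)) \<longlongrightarrow> 0) ?F"
    by (subst LIM_zero_iff) (use s0 in \<open>auto simp: continuous_on_def\<close>)
  have "((\<lambda>s. T (a s) (g s - g s0) + (T (a s) (g s0) - T (a s0) (g s0))) \<longlongrightarrow> 0 + 0) ?F"
    by (rule tendsto_add[OF c1 c2])
  moreover have "T (a s) (g s - g s0) + (T (a s) (g s0) - T (a s0) (g s0)) = T (a s) (g s) - T (a s0) (g s0)" for s
    using C0_lin[OF T, of "a s"] by (simp add: linear_simps)
  ultimately show "((\<lambda>s. T (a s) (g s)) \<longlongrightarrow> T (a s0) (g s0)) ?F"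
    by (simp add: LIM_zero_iff)
qed


definition G :: "'q \<Rightarrow> 'x \<Rightarrow> real \<Rightarrow> 'x" where
  "G q x s = f q (sol q s x, K (sol q s x))"

lemma sol_cont: "continuous_on {0..} (\<lambda>t. sol q t x)"
  using mild unfolding is_mild_solution_map_def by blast

lemma sol_eq: "0 \<le> t \<Longrightarrow> sol q t x = T t x + integral {0..t} (\<lambda>s. T (t - s) (G q x s))"
  using mild unfolding is_mild_solution_map_def G_def by blast

lemma sol_zero: "sol q 0 x = x"
  using sol_eq[of 0 q x] by (simp add: C0_zero[OF T])

lemma LK: "LK \<ge> 0" using KL lipschitz_on_nonneg by blast

lemma G_cont: "continuous_on {0..} (G q x)"
proof -
  have cK: "continuous_on UNIV K" using KL lipschitz_on_continuous_on by blast
  have cf: "continuous_on UNIV (f q)" using fL lipschitz_on_continuous_on by blast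
  have "continuous_on {0..} (\<lambda>s. (sol q s x, K (sol q s x)))"
    by (intro continuous_on_Pair sol_cont continuous_on_compose2[OF cK sol_cont]) auto
  then show ?thesis unfolding G_def
    by (rule continuous_on_compose2[OF cf]) auto
qed

lemma G_lip: "norm (G q x s - G q y s) \<le> Lf * (1 + LK) * norm (sol q s x - sol q s y)"
proof -
  let ?a = "sol q s x" and ?b = "sol q s y"
  have "norm (G q x s - G q y s) \<le> Lf * norm ((?a, K ?a) - (?b, K ?b))"
    unfolding G_def using lipschitz_on_normD[OF fL] by blast
  also have "norm ((?a, K ?a) - (?b, K ?b)) \<le> norm (?a - ?b) + norm (K ?a - K ?b)"
    using norm_Pair_le[of "?a - ?b" "K ?a - K ?b"] by simp
  also have "norm (K ?a - K ?b) \<le> LK * norm (?a - ?b)"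
    using lipschitz_on_normD[OF KL] by blast
  finally show ?thesis using Lf by (simp add: algebra_simps mult_left_mono)
qed

lemma integrand_cont:
  assumes "0 \<le> t" shows "continuous_on {0..t} (\<lambda>s. T (t - s) (G q x s))"
  by (rule Tcont[where B=t]) (auto intro!: continuous_intros continuous_on_subset[OF G_cont])

lemma integrand_int:
  assumes "0 \<le> t" shows "(\<lambda>s. T (t - s) (G q x s)) integrable_on {0..t}"
  by (rule integrable_continuous_interval[OF integrand_cont[OF assms]])


lemma single_lip:
  assumes t: "0 \<le> t"
  shows "snorm (sol q t x - sol q t y) \<le> exp ((w + MT * (Lf * (1 + LK))) * t) * snorm (x - y)"
proof -
  define c where "c = Lf * (1 + LK)"
  define C where "C = MT * c"
  define D where "D s = sol q s x - sol q s y" for s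
  define v where "v s = exp (- w * s) * norm (D s)" for s
  define a where "a = snorm (x - y)"
  have c0: "c \<ge> 0" using Lf LK by (simp add: c_def)
  have C0: "C \<ge> 0" using c0 MT by (simp add: C_def)
  have vcont: "continuous_on {0..b} v" for b
    unfolding v_def D_def
    by (intro continuous_intros continuous_on_subset[OF sol_cont]) auto
  have key: "exp (- w * r) * norm (T r (D t')) \<le> exp (w * t') * (a + C * integral {0..t'} v)"
    if r: "0 \<le> r" and t': "0 \<le> t'" for r t'
  proof -
    define Ix where "Ix = (\<lambda>s. T (t' - s) (G q x s))"
    define Iy where "Iy = (\<lambda>s. T (t' - s) (G q y s))"
    have ix: "Ix integrable_on {0..t'}" "Iy integrable_on {0..t'}"
      unfolding Ix_def Iy_def using integrand_int[OF t'] by auto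
    have lin: "bounded_linear (T r)" by (rule C0_lin[OF T])
    have "D t' = T t' (x - y) + integral {0..t'} (\<lambda>s. Ix s - Iy s)"
      unfolding D_def using sol_eq[OF t', of q x] sol_eq[OF t', of q y] integral_diff[OF ix]
        C0_lin[OF T, of t'] unfolding Ix_def Iy_def by (simp add: linear_simps)
    then have "T r (D t') = T (r + t') (x - y) + integral {0..t'} (\<lambda>s. T r (Ix s - Iy s))"
      using integral_linear[OF integrable_diff[OF ix] lin] lin C0_add[OF T, of r t' "x - y"]
      by (simp add: linear_simps o_def)
    then have A1: "norm (T r (D t')) \<le> norm (T (r + t') (x - y)) + norm (integral {0..t'} (\<lambda>s. T r (Ix s - Iy s)))"
      by (simp add: norm_triangle_ineq)
    have A2: "norm (integral {0..t'} (\<lambda>s. T r (Ix s - Iy s))) \<le> integral {0..t'} (\<lambda>s. (C * exp (w * (r + t'))) * v s)"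
    proof (rule integral_norm_bound_integral)
      show "(\<lambda>s. T r (Ix s - Iy s)) integrable_on {0..t'}"
        using integrable_linear[OF integrable_diff[OF ix] lin] by (simp add: o_def)
      show "(\<lambda>s. C * exp (w * (r + t')) * v s) integrable_on {0..t'}"
        by (intro integrable_continuous_interval continuous_intros vcont)
      fix s assume s: "s \<in> {0..t'}"
      have "T r (Ix s - Iy s) = T (r + (t' - s)) (G q x s - G q y s)"
        unfolding Ix_def Iy_def using C0_add[OF T] C0_lin[OF T, of "t' - s"] by (simp add: linear_simps)
      then have "norm (T r (Ix s - Iy s)) \<le> MT * exp (w * (r + (t' - s))) * norm (G q x s - G q y s)"
        using Tb[of "r + (t' - s)"] r s by auto
      also have "\<dots> \<le> MT * exp (w * (r + (t' - s))) * (c * norm (D s))"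
        using G_lip[of q x s y] MT unfolding c_def D_def by (intro mult_left_mono) auto
      also have "\<dots> = C * exp (w * (r + t')) * v s"
        unfolding C_def v_def by (simp add: algebra_simps exp_diff exp_minus field_simps)
      finally show "norm (T r (Ix s - Iy s)) \<le> C * exp (w * (r + t')) * v s" .
    qed
    have A3: "integral {0..t'} (\<lambda>s. (C * exp (w * (r + t'))) * v s) = C * exp (w * (r + t')) * integral {0..t'} v"
      by simp
    have A: "norm (T r (D t')) \<le> norm (T (r + t') (x - y)) + C * exp (w * (r + t')) * integral {0..t'} v"
      using A1 A2 A3 by linarith
    have B: "exp (- w * (r + t')) * norm (T (r + t') (x - y)) \<le> a"
      unfolding a_def by (rule sn_upper) (use r t' in auto)
    have "exp (- w * r) * norm (T r (D t')) \<le> exp (- w * r) * norm (T (r + t') (x - y)) + exp (- w * r) * (C * exp (w * (r + t')) * integral {0..t'} v)"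
      using mult_left_mono[OF A, of "exp (- w * r)"] by (simp add: distrib_left)
    also have "exp (- w * r) * norm (T (r + t') (x - y)) = exp (w * t') * (exp (- w * (r + t')) * norm (T (r + t') (x - y)))"
      by (simp add: algebra_simps flip: exp_add)
    also have "\<dots> \<le> exp (w * t') * a" using B by simp
    also have "exp (- w * r) * (C * exp (w * (r + t')) * integral {0..t'} v) = exp (w * t') * (C * integral {0..t'} v)"
      by (simp add: algebra_simps flip: exp_add)
    finally show ?thesis by (simp add: algebra_simps)
  qed
  have vle: "v s \<le> a + C * integral {0..s} v" if "s \<in> {0..t}" for s
    using key[of 0 s] that by (auto simp: v_def C0_zero[OF T] exp_minus field_simps)
  have gr: "a + C * integral {0..t} v \<le> a * exp (C * t)"
    by (rule gronwall[OF vcont C0 vle]) (use t in auto)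
  have "snorm (D t) \<le> exp (w * t) * (a * exp (C * t))"
  proof (rule sn_least)
    fix r :: real assume "0 \<le> r"
    then have "exp (- w * r) * norm (T r (D t)) \<le> exp (w * t) * (a + C * integral {0..t} v)"
      using key t by blast
    also have "\<dots> \<le> exp (w * t) * (a * exp (C * t))" using gr by simp
    finally show "exp (- w * r) * norm (T r (D t)) \<le> exp (w * t) * (a * exp (C * t))" .
  qed
  moreover have "exp (w * t) * (a * exp (C * t)) = exp ((w + MT * (Lf * (1 + LK))) * t) * a"
    unfolding C_def c_def by (simp add: algebra_simps flip: exp_add)
  ultimately show ?thesis unfolding D_def a_def by simp
qed

end



lemma st_mono: "switch_times ts \<Longrightarrow> i \<le> j \<Longrightarrow> ts i \<le> ts j"
  unfolding switch_times_def by (simp add: strict_mono_less_eq)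

lemma st_nonneg: "switch_times ts \<Longrightarrow> 0 \<le> ts k"
  using st_mono[of ts 0 k] unfolding switch_times_def by auto

lemma st_idx:
  assumes st: "switch_times ts" and t: "0 \<le> t"
  shows "\<exists>!k. ts k \<le> t \<and> t < ts (Suc k)"
proof -
  have "\<forall>\<^sub>F n in sequentially. t + 1 \<le> ts n"
    using st unfolding switch_times_def filterlim_at_top by blast
  then obtain N where "t + 1 \<le> ts N" unfolding eventually_sequentially by blast
  then have ex: "t < ts N" by simp
  define M where "M = (LEAST n. t < ts n)"
  have M: "t < ts M" unfolding M_def by (rule LeastI[of _ N]) (rule ex)
  have M0: "M \<noteq> 0"
  proof
    assume "M = 0" then show False using M t st by (simp add: switch_times_def)
  qed
  have "ts (M - 1) \<le> t"
  proof (rule ccontr)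
    assume "\<not> ts (M - 1) \<le> t"
    then have "M \<le> M - 1" unfolding M_def by (intro Least_le) simp
    then show False using M0 by simp
  qed
  then have ex1: "ts (M - 1) \<le> t \<and> t < ts (Suc (M - 1))" using M M0 by simp
  show ?thesis
  proof (rule ex1I[where a="M - 1" and P="\<lambda>k. ts k \<le> t \<and> t < ts (Suc k)", OF ex1])
    fix k assume k: "ts k \<le> t \<and> t < ts (Suc k)"
    show "k = M - 1"
    proof (rule ccontr)
      assume "k \<noteq> M - 1"
      then consider "Suc k \<le> M - 1" | "Suc (M - 1) \<le> k" by linarith
      then show False
      proof cases
        case 1 then show False using st_mono[OF st 1] k ex1 by linarith
      next
        case 2 then show False using st_mono[OF st 2] k ex1 by linarith
      qed
    qed
  qed
qed

lemma phi_eq: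
  assumes st: "switch_times ts" and k: "ts k \<le> t" "t < ts (Suc k)"
  shows "phi sol ts qs t x = sol (qs k) (t - ts k) (switch_state sol ts qs x k)"
proof -
  have t: "0 \<le> t" using st_nonneg[OF st, of k] k by linarith
  have "(THE k. ts k \<le> t \<and> t < ts (Suc k)) = k"
    using st_idx[OF st t] k by (intro the1_equality) auto
  then show ?thesis unfolding phi_def Let_def by simp
qed

lemma st_real: "switch_times (\<lambda>k. real k)"
  unfolding switch_times_def by (auto simp: strict_mono_def filterlim_real_sequentially)

lemma phi_zero: assumes st: "switch_times ts" shows "phi sol ts qs 0 x = sol (qs 0) 0 x"
proof -
  have "ts 0 = 0" "ts 0 < ts (Suc 0)" using st unfolding switch_times_def strict_mono_def by blast+
  then show ?thesis using phi_eq[OF st, of 0 0 sol qs x] by simp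
qed

definition cts :: "real \<Rightarrow> (nat \<Rightarrow> real) \<Rightarrow> nat \<Rightarrow> real" where
  "cts h ts k = (case k of 0 \<Rightarrow> 0 | Suc j \<Rightarrow> h + ts j)"
definition cqs :: "'q \<Rightarrow> (nat \<Rightarrow> 'q) \<Rightarrow> nat \<Rightarrow> 'q" where
  "cqs q qs k = (case k of 0 \<Rightarrow> q | Suc j \<Rightarrow> qs j)"

lemma cts_st: assumes st: "switch_times ts" and h: "0 < h" shows "switch_times (cts h ts)"
proof -
  have sm: "strict_mono (cts h ts)"
  proof (rule strict_monoI_Suc)
    fix n show "cts h ts n < cts h ts (Suc n)"
      using st h st_nonneg[OF st] unfolding switch_times_def strict_mono_def
      by (cases n) (auto simp: cts_def add_pos_nonneg)
  qed
  have "filterlim (\<lambda>k. h + ts k) at_top sequentially"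
    using st unfolding switch_times_def by (intro filterlim_tendsto_add_at_top[OF tendsto_const]) auto
  then have "filterlim (\<lambda>k. cts h ts (Suc k)) at_top sequentially" by (simp add: cts_def)
  then have "filterlim (cts h ts) at_top sequentially" by (simp add: filterlim_sequentially_Suc)
  then show ?thesis using sm unfolding switch_times_def by (simp add: cts_def)
qed

lemma cts_ss: "ts 0 = 0 \<Longrightarrow> switch_state sol (cts h ts) (cqs q qs) x (Suc k) = switch_state sol ts qs (sol q h x) k"
  by (induction k) (auto simp: cts_def cqs_def)

lemma cts_phi:
  assumes st: "switch_times ts" and h: "0 < h" and t: "0 \<le> t"
  shows "phi sol (cts h ts) (cqs q qs) (t + h) x = phi sol ts qs t (sol q h x)"
proof -
  obtain k where k: "ts k \<le> t" "t < ts (Suc k)" using st_idx[OF st t] by blast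
  have "phi sol (cts h ts) (cqs q qs) (t + h) x
      = sol (cqs q qs (Suc k)) (t + h - cts h ts (Suc k)) (switch_state sol (cts h ts) (cqs q qs) x (Suc k))"
    by (rule phi_eq[OF cts_st[OF st h]]) (use k in \<open>auto simp: cts_def\<close>)
  also have "\<dots> = sol (qs k) (t - ts k) (switch_state sol ts qs (sol q h x) k)"
    using st unfolding switch_times_def by (simp only: cts_ss) (simp add: cqs_def cts_def)
  also have "\<dots> = phi sol ts qs t (sol q h x)" by (rule phi_eq[OF st k, symmetric])
  finally show ?thesis .
qed

context sys begin

lemma ss_lip:
  assumes st: "switch_times ts"
  shows "snorm (switch_state sol ts qs x k - switch_state sol ts qs y k)
     \<le> exp ((w + MT * (Lf * (1 + LK))) * ts k) * snorm (x - y)"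
proof (induction k)
  case 0 then show ?case using st by (simp add: switch_times_def)
next
  case (Suc k)
  let ?g = "w + MT * (Lf * (1 + LK))"
  have d: "0 \<le> ts (Suc k) - ts k" using st_mono[OF st, of k "Suc k"] by simp
  have "snorm (switch_state sol ts qs x (Suc k) - switch_state sol ts qs y (Suc k))
     \<le> exp (?g * (ts (Suc k) - ts k)) * snorm (switch_state sol ts qs x k - switch_state sol ts qs y k)"
    by (simp add: single_lip[OF d])
  also have "\<dots> \<le> exp (?g * (ts (Suc k) - ts k)) * (exp (?g * ts k) * snorm (x - y))"
    by (intro mult_left_mono Suc) auto
  also have "\<dots> = exp (?g * ts (Suc k)) * snorm (x - y)"
    by (simp add: algebra_simps flip: exp_add)
  finally show ?case .
qed

lemma phi_lip:
  assumes st: "switch_times ts" and t: "0 \<le> t"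
  shows "norm (phi sol ts qs t x - phi sol ts qs t y)
     \<le> MT * exp ((w + MT * (Lf * (1 + LK))) * t) * norm (x - y)"
proof -
  let ?g = "w + MT * (Lf * (1 + LK))"
  have g: "?g \<ge> 0" using w MT Lf LK by simp
  obtain k where k: "ts k \<le> t" "t < ts (Suc k)" using st_idx[OF st t] by blast
  have "norm (phi sol ts qs t x - phi sol ts qs t y)
     \<le> snorm (sol (qs k) (t - ts k) (switch_state sol ts qs x k) - sol (qs k) (t - ts k) (switch_state sol ts qs y k))"
    using norm_le_sn phi_eq[OF st k] by metis
  also have "\<dots> \<le> exp (?g * (t - ts k)) * snorm (switch_state sol ts qs x k - switch_state sol ts qs y k)"
    by (rule single_lip) (use k in auto)
  also have "\<dots> \<le> exp (?g * (t - ts k)) * (exp (?g * ts k) * snorm (x - y))"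
    by (intro mult_left_mono ss_lip st) auto
  also have "\<dots> = exp (?g * t) * snorm (x - y)"
    by (simp add: algebra_simps flip: exp_add)
  also have "\<dots> \<le> exp (?g * t) * (MT * norm (x - y))"
    by (intro mult_left_mono sn_le) auto
  finally show ?thesis by (simp add: algebra_simps)
qed

end



context sys begin

lemma main_r:
  assumes U: "USGES sol" and r: "r > 0"
  shows "\<exists>cl>0. \<exists>cu>0. \<exists>V :: 'x \<Rightarrow> real.
           (\<exists>L. L-lipschitz_on UNIV V) \<and> (\<forall>x. V x \<ge> 0) \<and>
           (\<forall>x\<in>cball 0 r. cl * norm x \<le> V x \<and> V x \<le> cu * norm x) \<and>
           (\<forall>x\<in>cball 0 r. \<forall>q. dini_upper sol V q x \<le> ereal (- norm x))"
proof -
  obtain M lam where M: "M > 0" and lam: "lam > 0" and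
    B: "\<And>ts qs x t. switch_times ts \<Longrightarrow> x \<in> cball 0 r \<Longrightarrow> t \<ge> 0 \<Longrightarrow>
        norm (phi sol ts qs t x) \<le> M * exp (- lam * t) * norm x"
    using U r unfolding USGES_def by blast
  define g where "g = w + MT * (Lf * (1 + LK))"
  have g: "g \<ge> 0" using w MT Lf LK by (simp add: g_def)
  define mu where "mu = lam / 2"
  have mu: "mu > 0" using lam by (simp add: mu_def)
  define tau where "tau = (\<bar>ln M\<bar> + 1) / mu"
  have tau: "tau \<ge> 0" using mu by (simp add: tau_def)
  have Mtau: "M * exp (- mu * tau) \<le> 1"
  proof -
    have "mu * tau = \<bar>ln M\<bar> + 1" using mu by (simp add: tau_def)
    then have "ln M \<le> mu * tau" by linarith
    then have "M \<le> exp (mu * tau)" using M by (metis exp_ln exp_le_cancel_iff)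
    then show ?thesis by (simp add: exp_minus field_simps)
  qed
  have phi0: "phi sol ts qs t 0 = 0" if "switch_times ts" "0 \<le> t" for ts qs t
    using B[OF that(1) _ that(2), of 0 qs] r by simp
  define S where "S = {p :: (nat \<Rightarrow> real) \<times> (nat \<Rightarrow> 'q) \<times> real.
      switch_times (fst p) \<and> 0 \<le> snd (snd p) \<and> snd (snd p) \<le> tau}"
  define F where "F p x = exp (mu * snd (snd p)) * norm (phi sol (fst p) (fst (snd p)) (snd (snd p)) x)"
    for p :: "(nat \<Rightarrow> real) \<times> (nat \<Rightarrow> 'q) \<times> real" and x
  define Lc where "Lc = exp (mu * tau) * MT * exp (g * tau)"
  have Lc: "Lc \<ge> 0" using MT by (simp add: Lc_def)
  have Flip: "\<bar>F p x - F p y\<bar> \<le> Lc * norm (x - y)" if p: "p \<in> S" for p x y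
  proof -
    obtain ts qs t where pe: "p = (ts, qs, t)" by (cases p) auto
    have st: "switch_times ts" and t: "0 \<le> t" "t \<le> tau" using p by (auto simp: S_def pe)
    have "\<bar>F p x - F p y\<bar> = exp (mu * t) * \<bar>norm (phi sol ts qs t x) - norm (phi sol ts qs t y)\<bar>"
      by (simp add: F_def pe abs_mult flip: right_diff_distrib)
    also have "\<dots> \<le> exp (mu * t) * norm (phi sol ts qs t x - phi sol ts qs t y)"
      by (intro mult_left_mono norm_triangle_ineq3) auto
    also have "\<dots> \<le> exp (mu * t) * (MT * exp (g * t) * norm (x - y))"
      by (intro mult_left_mono phi_lip[OF st t(1), unfolded g_def[symmetric]]) auto
    also have "\<dots> \<le> Lc * norm (x - y)"
      unfolding Lc_def using t mu g MT
      by (simp add: mult.assoc, intro mult_mono mult_left_mono) (auto intro!: mult_mono)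
    finally show ?thesis .
  qed
  have Fbound: "F p x \<le> Lc * norm x" if p: "p \<in> S" for p x
  proof -
    obtain ts qs t where pe: "p = (ts, qs, t)" by (cases p) auto
    have st: "switch_times ts" and t: "0 \<le> t" using p by (auto simp: S_def pe)
    have "F p 0 = 0" using phi0[OF st t] by (simp add: F_def pe)
    then show ?thesis using Flip[OF p, of x 0] by simp
  qed
  define p0 :: "(nat \<Rightarrow> real) \<times> (nat \<Rightarrow> 'q) \<times> real" where "p0 = (\<lambda>k. real k, \<lambda>_. undefined, 0)"
  have p0: "p0 \<in> S" using st_real tau by (simp add: S_def p0_def)
  have Fp0: "F p0 x = norm x" for x
    using phi_zero[OF st_real, of sol "\<lambda>_. undefined" x] sol_zero[of undefined x]
    by (simp add: F_def p0_def)
  have Sne: "S \<noteq> {}" using p0 by blast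
  define W where "W x = (SUP p\<in>S. F p x)" for x
  have bdd: "bdd_above ((\<lambda>p. F p x) ` S)" for x
    using Fbound by (intro bdd_aboveI[of _ "Lc * norm x"]) auto
  have Wup: "F p x \<le> W x" if "p \<in> S" for p x
    unfolding W_def by (rule cSUP_upper[OF that bdd])
  have Wleast: "W x \<le> C" if "\<And>p. p \<in> S \<Longrightarrow> F p x \<le> C" for x C
    unfolding W_def using Sne that by (rule cSUP_least)
  have Wge: "norm x \<le> W x" for x using Wup[OF p0] Fp0 by metis
  have Wlip: "W x \<le> W y + Lc * norm (x - y)" for x y
  proof (rule Wleast)
    fix p assume p: "p \<in> S"
    have "F p x \<le> F p y + Lc * norm (x - y)" using Flip[OF p, of x y] by linarith
    then show "F p x \<le> W y + Lc * norm (x - y)" using Wup[OF p, of y] by linarith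
  qed
  have Wball: "W x \<le> M * norm x" if x: "x \<in> cball 0 r" for x
  proof (rule Wleast)
    fix p assume p: "p \<in> S"
    obtain ts qs t where pe: "p = (ts, qs, t)" by (cases p) auto
    have st: "switch_times ts" and t: "0 \<le> t" using p by (auto simp: S_def pe)
    have "F p x \<le> exp (mu * t) * (M * exp (- lam * t) * norm x)"
      unfolding F_def pe using B[OF st x t, of qs] by (simp add: mult_left_mono)
    also have "\<dots> = M * exp (- mu * t) * norm x"
      by (simp add: mu_def algebra_simps flip: exp_add)
    also have "\<dots> \<le> M * 1 * norm x"
      using M mu t by (intro mult_right_mono mult_left_mono) auto
    finally show "F p x \<le> M * norm x" by simp
  qed
  have Wdec: "W (sol q h x) \<le> exp (- mu * h) * W x" if x: "x \<in> cball 0 r" and h: "h > 0" for q h x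
  proof (rule Wleast)
    fix p assume p: "p \<in> S"
    obtain ts qs t where pe: "p = (ts, qs, t)" by (cases p) auto
    have st: "switch_times ts" and t: "0 \<le> t" "t \<le> tau" using p by (auto simp: S_def pe)
    have st': "switch_times (cts h ts)" by (rule cts_st[OF st h])
    have "F p (sol q h x) = exp (mu * t) * norm (phi sol (cts h ts) (cqs q qs) (t + h) x)"
      by (simp add: F_def pe cts_phi[OF st h t(1)])
    also have "\<dots> \<le> exp (- mu * h) * W x"
    proof (cases "t + h \<le> tau")
      case True
      have p': "(cts h ts, cqs q qs, t + h) \<in> S" using True st' t h by (simp add: S_def)
      have "exp (mu * t) * norm (phi sol (cts h ts) (cqs q qs) (t + h) x)
          = exp (- mu * h) * F (cts h ts, cqs q qs, t + h) x"
        by (simp add: F_def algebra_simps flip: exp_add)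
      also have "\<dots> \<le> exp (- mu * h) * W x" by (intro mult_left_mono Wup[OF p']) auto
      finally show ?thesis .
    next
      case False
      have "exp (mu * t) * norm (phi sol (cts h ts) (cqs q qs) (t + h) x)
          \<le> exp (mu * t) * (M * exp (- lam * (t + h)) * norm x)"
        by (intro mult_left_mono B[OF st' x]) (use t h in auto)
      also have "\<dots> = exp (- mu * h) * (M * exp (- mu * (t + h))) * norm x"
      proof -
        have "mu * t + (- lam * (t + h)) = - mu * h + (- mu * (t + h))" unfolding mu_def by (simp add: field_simps)
        then have "exp (mu * t) * exp (- lam * (t + h)) = exp (- mu * h) * exp (- mu * (t + h))"
          by (simp flip: exp_add)
        then show ?thesis by (simp add: algebra_simps)
      qed
      also have "M * exp (- mu * (t + h)) \<le> M * exp (- mu * tau)"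
        using False mu M by (intro mult_left_mono) auto
      also have "\<dots> \<le> 1" by (rule Mtau)
      also have "exp (- mu * h) * 1 * norm x \<le> exp (- mu * h) * W x"
        using Wge[of x] by simp
      finally show ?thesis by (simp add: mult_left_mono mult_right_mono)
    qed
    finally show "F p (sol q h x) \<le> exp (- mu * h) * W x" .
  qed
  define V where "V x = W x / mu" for x
  have V1: "\<exists>L. L-lipschitz_on UNIV V"
  proof (intro exI[of _ "Lc / mu"] lipschitz_onI)
    fix x y :: 'x
    have "\<bar>W x - W y\<bar> \<le> Lc * dist x y"
      using Wlip[of x y] Wlip[of y x] by (simp add: dist_norm norm_minus_commute abs_le_iff)
    then show "dist (V x) (V y) \<le> Lc / mu * dist x y"
      using mu by (simp add: V_def dist_real_def field_simps flip: diff_divide_distrib)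
  qed (use Lc mu in auto)
  have V2: "\<forall>x. V x \<ge> 0"
  proof
    fix x :: 'x
    have "0 \<le> W x" using Wge[of x] norm_ge_zero[of x] by linarith
    then show "V x \<ge> 0" using mu by (simp add: V_def)
  qed
  have V3: "\<forall>x\<in>cball 0 r. 1 / mu * norm x \<le> V x \<and> V x \<le> M / mu * norm x"
  proof
    fix x :: 'x assume x: "x \<in> cball 0 r"
    show "1 / mu * norm x \<le> V x \<and> V x \<le> M / mu * norm x"
      using Wge[of x] Wball[OF x] mu by (simp add: V_def divide_right_mono)
  qed
  have V4: "\<forall>x\<in>cball 0 r. \<forall>q. dini_upper sol V q x \<le> ereal (- norm x)"
  proof (intro ballI allI)
    fix x :: 'x and q assume x: "x \<in> cball 0 r"
    have ev: "\<forall>\<^sub>F h in at_right 0. ereal ((V (sol q h x) - V x) / h)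
        \<le> ereal ((exp (- mu * h) - 1) / h * V x)"
    proof (rule eventually_mono[OF eventually_at_right_less])
      fix h :: real assume h: "0 < h"
      have "V (sol q h x) \<le> exp (- mu * h) * V x"
        using Wdec[OF x h, of q] mu by (simp add: V_def divide_right_mono)
      then have "V (sol q h x) - V x \<le> (exp (- mu * h) - 1) * V x" by (simp add: algebra_simps)
      then show "ereal ((V (sol q h x) - V x) / h) \<le> ereal ((exp (- mu * h) - 1) / h * V x)"
        using h by (simp add: divide_right_mono)
    qed
    have "((\<lambda>h. (exp (- mu * (0 + h)) - exp (- mu * 0)) / h) \<longlongrightarrow> - mu) (at 0)"
      by (rule DERIV_D) (auto intro!: derivative_eq_intros)
    then have "((\<lambda>h. (exp (- mu * h) - 1) / h) \<longlongrightarrow> - mu) (at_right 0)"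
      using filterlim_at_split by force
    then have "((\<lambda>h. (exp (- mu * h) - 1) / h * V x) \<longlongrightarrow> - mu * V x) (at_right 0)"
      by (intro tendsto_intros)
    then have lim: "((\<lambda>h. ereal ((exp (- mu * h) - 1) / h * V x)) \<longlongrightarrow> ereal (- mu * V x)) (at_right 0)"
      by simp
    have "dini_upper sol V q x \<le> Limsup (at_right 0) (\<lambda>h. ereal ((exp (- mu * h) - 1) / h * V x))"
      unfolding dini_upper_def by (rule Limsup_mono[OF ev])
    also have "\<dots> = ereal (- mu * V x)"
      by (rule lim_imp_Limsup[OF trivial_limit_at_right_real lim])
    also have "- mu * V x \<le> - norm x" using Wge[of x] mu by (simp add: V_def)
    finally show "dini_upper sol V q x \<le> ereal (- norm x)" by simp
  qed
  have "1 / mu > 0" "M / mu > 0" using mu M by auto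
  then show ?thesis using V1 V2 V3 V4 by blast
qed

end


theorem lemma1:
  fixes T :: "real \<Rightarrow> 'x::banach \<Rightarrow> 'x"
    and f :: "'q \<Rightarrow> 'x \<times> 'u::banach \<Rightarrow> 'x"
    and K :: "'x \<Rightarrow> 'u"
    and sol :: "'q \<Rightarrow> real \<Rightarrow> 'x \<Rightarrow> 'x"
    and Lf :: real
  assumes "C0_group T"
    and "Lf > 0"
    and "\<And>q. Lf-lipschitz_on UNIV (f q)"
    and "\<And>q. f q (0, 0) = 0"
    and "\<exists>LK. LK-lipschitz_on UNIV K"
    and "K 0 = 0"
    and "is_mild_solution_map T f K sol"
    and "USGES sol"
  shows "\<forall>r>0. \<exists>cl>0. \<exists>cu>0. \<exists>V :: 'x \<Rightarrow> real.
           (\<exists>L. L-lipschitz_on UNIV V) \<and> (\<forall>x. V x \<ge> 0) \<and>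
           (\<forall>x\<in>cball 0 r. cl * norm x \<le> V x \<and> V x \<le> cu * norm x) \<and>
           (\<forall>x\<in>cball 0 r. \<forall>q. dini_upper sol V q x \<le> ereal (- norm x))"
proof -
  obtain LK where KL: "LK-lipschitz_on UNIV K" using assms(5) by blast
  obtain MT w where MT: "MT \<ge> 1" "w \<ge> 0"
    "\<forall>t x. 0 \<le> t \<longrightarrow> norm (T t x) \<le> MT * exp (w * t) * norm x"
    using T_exp_bound[OF assms(1)] by blast
  interpret sys T f K sol Lf LK MT w
    by unfold_locales (use assms KL MT in auto)
  show ?thesis using main_r assms(8) by blast
qed

end
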